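(* For every integer $n\ge 3$, the polytope $\operatorname{conv}\phi_n$ is not 3-neighborly; that is, there exist three vertices of $\operatorname{conv}\phi_n$ whose convex hull is not a face of $\operatorname{conv}\phi_n$. (For $n=3$, the sum of the three elements of $\phi_3$ corresponding to the three cyclic permutations (including the identity) equals the sum of the three elements corresponding to the three transpositions.)
   Context: For $n\ge 3$, $\phi_n$ is the set of $\binom{n}{2}\times\binom{n}{2}$ permutation matrices of the edges of the complete graph $K_n$ induced by permutations of its vertices: for a permutation $\sigma$ of $[n]$, the associated vector $\bm{z}\in\{0,1\}^{\binom{n}{2}\times\binom{n}{2}}$ has coordinates $z_{ijkl}$, $i,j,k,l\in[n]$, $i<j$, $k<l$, with $z_{ijkl}=1$ iff $\{\sigma(i),\sigma(j)\}=\{k,l\}$, and $0$ otherwise. All elements of $\phi_n$ are vertices of $\operatorname{conv}\phi_n$. A polytope is $k$-neighborly if every set of at most $k$ of its vertices is the vertex set of a face. *)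

theory Defs
  imports "HOL-Analysis.Analysis" "HOL-Analysis.Finite_Function_Topology" "HOL-Combinatorics.Permutations"
begin

text \<open>Coordinates are indexed by quadruples (i,j,k,l) of naturals; only those with
  1 \<le> i < j \<le> n and 1 \<le> k < l \<le> n can be nonzero.\<close>

definition edge_perm_vec :: "nat \<Rightarrow> (nat \<Rightarrow> nat) \<Rightarrow> ((nat \<times> nat \<times> nat \<times> nat), real) poly_mapping" where
  "edge_perm_vec n \<sigma> = Abs_poly_mapping (\<lambda>(i,j,k,l).
     if i \<in> {1..n} \<and> j \<in> {1..n} \<and> k \<in> {1..n} \<and> l \<in> {1..n} \<and> i < j \<and> k < l
        \<and> {\<sigma> i, \<sigma> j} = {k, l} then 1 else 0)"

definition phi :: "nat \<Rightarrow> (((nat \<times> nat \<times> nat \<times> nat), real) poly_mapping) set" where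
  "phi n = {edge_perm_vec n \<sigma> | \<sigma>. \<sigma> permutes {1..n}}"

definition neighborly :: "nat \<Rightarrow> 'a::real_vector set \<Rightarrow> bool" where
  "neighborly k P \<longleftrightarrow>
     (\<forall>S. S \<subseteq> {v. v extreme_point_of P} \<and> finite S \<and> card S \<le> k \<longrightarrow>
        (\<exists>F. F face_of P \<and> {v. v extreme_point_of F} = S))"

end

theory Submission imports Defs begin

lemma lookup_epv:
  "Poly_Mapping.lookup (edge_perm_vec n \<sigma>) (i,j,k,l) = (if i \<in> {1..n} \<and> j \<in> {1..n} \<and> k \<in> {1..n} \<and> l \<in> {1..n} \<and> i < j \<and> k < l
        \<and> {\<sigma> i, \<sigma> j} = {k, l} then 1 else 0)"
proof -
  have "finite {q. (\<lambda>(i,j,k,l). if i \<in> {1..n} \<and> j \<in> {1..n} \<and> k \<in> {1..n} \<and> l \<in> {1..n} \<and> i < j \<and> k < l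
        \<and> {\<sigma> i, \<sigma> j} = {k, l} then 1 else (0::real)) q \<noteq> 0}"
    by (rule finite_subset[of _ "{1..n} \<times> {1..n} \<times> {1..n} \<times> {1..n}"]) (auto split: if_splits)
  then show ?thesis unfolding edge_perm_vec_def by (simp add: lookup_Abs_poly_mapping)
qed

lemma setpair: "(k::nat) < l \<Longrightarrow> ({a, b} = {k, l}) \<longleftrightarrow> (min a b = k \<and> max a b = l)"
  by (auto simp: doubleton_eq_iff min_def max_def)

definition good :: "nat \<Rightarrow> nat \<Rightarrow> nat \<Rightarrow> nat \<Rightarrow> nat \<Rightarrow> bool" where
  "good n i j k l \<longleftrightarrow> i \<in> {1..n} \<and> j \<in> {1..n} \<and> k \<in> {1..n} \<and> l \<in> {1..n} \<and> i < j \<and> k < l"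

lemma lookup_epv':
  "Poly_Mapping.lookup (edge_perm_vec n \<sigma>) (i,j,k,l) = (if good n i j k l then (if {\<sigma> i, \<sigma> j} = {k, l} then 1 else 0) else 0)"
  unfolding lookup_epv good_def by simp

lemma lookup_scaleR_pm: "Poly_Mapping.lookup (r *\<^sub>R (x::('a, real) poly_mapping)) i = r * Poly_Mapping.lookup x i"
proof -
  have "finite {i. r * Poly_Mapping.lookup x i \<noteq> 0}"
  proof (rule finite_subset[of _ "Poly_Mapping.keys x"])
    show "{i. r * Poly_Mapping.lookup x i \<noteq> 0} \<subseteq> Poly_Mapping.keys x" 
      using Poly_Mapping.in_keys_iff by fastforce
  qed simp
  then show ?thesis unfolding scaleR_poly_mapping_def by (simp add: lookup_Abs_poly_mapping)
qed

definition cyc :: "nat \<Rightarrow> nat" where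
  "cyc i = (if i = 1 then 2 else if i = 2 then 3 else if i = 3 then 1 else i)"
definition cyc2 :: "nat \<Rightarrow> nat" where
  "cyc2 i = (if i = 1 then 3 else if i = 2 then 1 else if i = 3 then 2 else i)"
definition tr :: "nat \<Rightarrow> nat \<Rightarrow> nat \<Rightarrow> nat" where
  "tr a b i = (if i = a then b else if i = b then a else i)"

lemma tr_perm: "a \<in> S \<Longrightarrow> b \<in> S \<Longrightarrow> tr a b permutes S"
proof -
  assume "a \<in> S" "b \<in> S"
  moreover have "tr a b = Transposition.transpose a b" by (rule ext) (simp add: tr_def Transposition.transpose_def)
  ultimately show ?thesis by (simp add: permutes_swap_id)
qed

lemma cyc_perm: "n \<ge> 3 \<Longrightarrow> cyc permutes {1..n}"
proof -
  assume n: "n \<ge> 3"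
  have "cyc = tr 1 2 \<circ> tr 2 3" by (rule ext) (simp add: cyc_def tr_def)
  moreover have "tr 1 2 permutes {1..n}" "tr 2 3 permutes {1..n}" using n by (auto intro: tr_perm)
  ultimately show ?thesis by (metis permutes_compose)
qed

lemma cyc2_perm: "n \<ge> 3 \<Longrightarrow> cyc2 permutes {1..n}"
proof -
  assume n: "n \<ge> 3"
  have "cyc2 = tr 1 3 \<circ> tr 2 3" by (rule ext) (simp add: cyc2_def tr_def)
  moreover have "tr 1 3 permutes {1..n}" "tr 2 3 permutes {1..n}" using n by (auto intro: tr_perm)
  ultimately show ?thesis by (metis permutes_compose)
qed

lemma sum_id:
  "edge_perm_vec n id + edge_perm_vec n cyc + edge_perm_vec n cyc2
   = edge_perm_vec n (tr 1 2) + edge_perm_vec n (tr 1 3) + edge_perm_vec n (tr 2 3)"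
proof (rule poly_mapping_eqI)
  fix q :: "nat \<times> nat \<times> nat \<times> nat"
  obtain i j k l where q: "q = (i,j,k,l)" by (cases q) auto
  show "Poly_Mapping.lookup (edge_perm_vec n id + edge_perm_vec n cyc + edge_perm_vec n cyc2) q =
        Poly_Mapping.lookup (edge_perm_vec n (tr 1 2) + edge_perm_vec n (tr 1 3) + edge_perm_vec n (tr 2 3)) q"
  proof (cases "good n i j k l")
    case False
    then show ?thesis unfolding q lookup_add lookup_epv' by simp
  next
    case True
    then have kl: "k < l" and ij: "i < j" and i1: "i \<ge> 1" by (auto simp: good_def)
    have "i=1 \<or> i=2 \<or> i=3 \<or> i>3" "j=1 \<or> j=2 \<or> j=3 \<or> j>3" using i1 ij by auto
    then show ?thesis unfolding q lookup_add lookup_epv' if_P[OF True]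
      apply (elim disjE)
      using ij kl by (simp_all add: setpair tr_def cyc_def cyc2_def)
  qed
qed

definition Cset :: "nat \<Rightarrow> (nat \<times> nat \<times> nat \<times> nat) set" where
  "Cset n = {1..n} \<times> {1..n} \<times> {1..n} \<times> {1..n}"

lemma finite_Cset: "finite (Cset n)" by (simp add: Cset_def)

lemma epv_01: "Poly_Mapping.lookup (edge_perm_vec n \<sigma>) q = 0 \<or> Poly_Mapping.lookup (edge_perm_vec n \<sigma>) q = 1"
  by (cases q) (simp add: lookup_epv')

lemma epv_out: "q \<notin> Cset n \<Longrightarrow> Poly_Mapping.lookup (edge_perm_vec n \<sigma>) q = 0"
  by (cases q) (auto simp: lookup_epv' good_def Cset_def)

definition LL :: "nat \<Rightarrow> ((nat \<times> nat \<times> nat \<times> nat), real) poly_mapping \<Rightarrow> ((nat \<times> nat \<times> nat \<times> nat), real) poly_mapping \<Rightarrow> real" where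
  "LL n v x = (\<Sum>q\<in>Cset n. (2 * Poly_Mapping.lookup v q - 1) * Poly_Mapping.lookup x q)"

lemma LL_lin: "LL n v (a *\<^sub>R x + b *\<^sub>R y) = a * LL n v x + b * LL n v y"
  unfolding LL_def sum_distrib_left sum.distrib[symmetric] lookup_add lookup_scaleR_pm
  by (rule sum.cong) (simp_all add: algebra_simps)

lemma convex_LL: "convex {x. LL n v x \<le> c}"
  unfolding convex_def
proof (intro ballI allI impI)
  fix x y and u w :: real
  assume x: "x \<in> {x. LL n v x \<le> c}" and y: "y \<in> {x. LL n v x \<le> c}" and u: "0 \<le> u" and w: "0 \<le> w" and uw: "u + w = 1"
  have "u * LL n v x + w * LL n v y \<le> u * c + w * c"
    using x y u w by (intro add_mono mult_left_mono) auto
  also have "\<dots> = (u + w) * c" by (simp add: algebra_simps)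
  also have "\<dots> = c" using uw by simp
  finally show "u *\<^sub>R x + w *\<^sub>R y \<in> {x. LL n v x \<le> c}" by (simp add: LL_lin)
qed

lemma sq01: "(a::real) \<in> {0,1} \<Longrightarrow> b \<in> {0,1} \<Longrightarrow> (2 * a - 1) * (b - a) = - ((b - a)^2)"
  by auto

lemma LL_gap:
  assumes "v = edge_perm_vec n \<sigma>" "w = edge_perm_vec n \<tau>" "w \<noteq> v"
  shows "LL n v w \<le> LL n v v - 1"
proof -
  have "\<exists>q. Poly_Mapping.lookup w q \<noteq> Poly_Mapping.lookup v q"
  proof (rule ccontr)
    assume "\<not> ?thesis"
    then have "w = v" by (intro poly_mapping_eqI) auto
    with assms(3) show False by simp
  qed
  then obtain q0 where q0: "Poly_Mapping.lookup w q0 \<noteq> Poly_Mapping.lookup v q0" by blast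
  have q0C: "q0 \<in> Cset n"
  proof (rule ccontr)
    assume "q0 \<notin> Cset n"
    then have "Poly_Mapping.lookup w q0 = 0" "Poly_Mapping.lookup v q0 = 0"
      unfolding assms(1,2) by (simp_all add: epv_out)
    with q0 show False by simp
  qed
  have "LL n v w - LL n v v = (\<Sum>q\<in>Cset n. (2 * Poly_Mapping.lookup v q - 1) * (Poly_Mapping.lookup w q - Poly_Mapping.lookup v q))"
    unfolding LL_def sum_subtractf[symmetric] by (rule sum.cong) (simp_all add: algebra_simps)
  also have "\<dots> = - (\<Sum>q\<in>Cset n. (Poly_Mapping.lookup w q - Poly_Mapping.lookup v q)^2)"
    unfolding sum_negf[symmetric]
  proof (rule sum.cong[OF refl])
    fix q
    have a: "Poly_Mapping.lookup v q \<in> {0,1}" using epv_01[of n \<sigma> q] unfolding assms(1) by blast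
    have b: "Poly_Mapping.lookup w q \<in> {0,1}" using epv_01[of n \<tau> q] unfolding assms(2) by blast
    show "(2 * Poly_Mapping.lookup v q - 1) * (Poly_Mapping.lookup w q - Poly_Mapping.lookup v q) =
          - ((Poly_Mapping.lookup w q - Poly_Mapping.lookup v q)^2)" by (rule sq01[OF a b])
  qed
  also have "\<dots> \<le> - 1"
  proof -
    have "(Poly_Mapping.lookup w q0 - Poly_Mapping.lookup v q0)^2 = 1"
      using q0 epv_01[of n \<sigma> q0] epv_01[of n \<tau> q0] unfolding assms(1,2) by auto
    moreover have "(Poly_Mapping.lookup w q0 - Poly_Mapping.lookup v q0)^2 \<le> (\<Sum>q\<in>Cset n. (Poly_Mapping.lookup w q - Poly_Mapping.lookup v q)^2)"
      by (rule member_le_sum) (auto simp: q0C finite_Cset)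
    ultimately show ?thesis by linarith
  qed
  finally show ?thesis by linarith
qed

lemma LL_self: "v = edge_perm_vec n \<sigma> \<Longrightarrow> LL n v v = LL n v v" by simp

lemma phi_img: "phi n = (\<lambda>\<sigma>. edge_perm_vec n \<sigma>) ` {\<sigma>. \<sigma> permutes {1..n}}"
  unfolding phi_def by auto

lemma finite_phi: "finite (phi n)"
  unfolding phi_img by (rule finite_imageI) (simp add: finite_permutations)

lemma epv_extreme:
  assumes "\<sigma> permutes {1..n}"
  shows "edge_perm_vec n \<sigma> extreme_point_of convex hull (phi n)"
proof -
  define v where "v = edge_perm_vec n \<sigma>"
  have vin: "v \<in> phi n" unfolding v_def phi_def using assms by blast
  have "convex hull (phi n - {v}) \<subseteq> {x. LL n v x \<le> LL n v v - 1}"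
  proof (rule hull_minimal)
    show "phi n - {v} \<subseteq> {x. LL n v x \<le> LL n v v - 1}"
      using LL_gap v_def unfolding phi_def by blast
  qed (rule convex_LL)
  then have "v \<notin> convex hull (phi n - {v})" by auto
  then have "v extreme_point_of convex hull (insert v (phi n - {v}))"
    by (intro extreme_point_of_convex_hull_insert) (auto simp: finite_phi)
  moreover have "insert v (phi n - {v}) = phi n" using vin by blast
  ultimately show ?thesis by (simp add: v_def)
qed

lemma conv3: "(1/3::real) *\<^sub>R (a + b + c) = (1/3) *\<^sub>R a + (2/3) *\<^sub>R ((1/2) *\<^sub>R b + (1/2) *\<^sub>R c)"
  for a b c :: "((nat \<times> nat \<times> nat \<times> nat), real) poly_mapping"
  by (simp add: scaleR_add_right)

lemma conv2: "(1/3::real) + 2/3 = 1" "(1/2::real) + 1/2 = 1" by simp_all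

theorem mainTheorem4:
  fixes n :: nat
  assumes "n \<ge> 3"
  shows "\<not> neighborly 3 (convex hull (phi n))"
proof
  assume H: "neighborly 3 (convex hull (phi n))"
  define P where "P = convex hull (phi n)"
  define x1 where "x1 = edge_perm_vec n id"
  define x2 where "x2 = edge_perm_vec n cyc"
  define x3 where "x3 = edge_perm_vec n cyc2"
  define y1 where "y1 = edge_perm_vec n (tr 1 2)"
  define y2 where "y2 = edge_perm_vec n (tr 1 3)"
  define y3 where "y3 = edge_perm_vec n (tr 2 3)"
  have pid: "id permutes {1..n}" by (rule permutes_id)
  have pc: "cyc permutes {1..n}" "cyc2 permutes {1..n}" using cyc_perm[OF assms] cyc2_perm[OF assms] by auto
  have pt: "tr 1 2 permutes {1..n}" "tr 1 3 permutes {1..n}" "tr 2 3 permutes {1..n}"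
    using assms by (auto intro: tr_perm)
  have ex: "x1 extreme_point_of P" "x2 extreme_point_of P" "x3 extreme_point_of P" "y1 extreme_point_of P"
    unfolding x1_def x2_def x3_def y1_def P_def using pid pc pt by (auto intro: epv_extreme)
  have yin: "y1 \<in> P" "y2 \<in> P" "y3 \<in> P"
    unfolding y1_def y2_def y3_def P_def using pt unfolding phi_def by (auto intro: hull_inc)
  define S where "S = {x1, x2, x3}"
  have cardS: "card S \<le> 3" unfolding S_def
    by (auto simp: card_insert_if)
  have "S \<subseteq> {v. v extreme_point_of P} \<and> finite S \<and> card S \<le> 3"
    using ex cardS unfolding S_def by auto
  then obtain F where F: "F face_of P" and FS: "{v. v extreme_point_of F} = S"
    using H unfolding neighborly_def P_def by blast
  have xF: "x1 \<in> F" "x2 \<in> F" "x3 \<in> F" using FS unfolding S_def extreme_point_of_def by auto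
  have cF: "convex F" using F face_of_imp_convex by blast
  define m where "m = (1/3::real) *\<^sub>R (x1 + x2 + x3)"
  have "(1/2::real) *\<^sub>R x2 + (1/2) *\<^sub>R x3 \<in> F"
    using cF xF unfolding convex_def by (simp add: conv2)
  then have mF: "m \<in> F"
    using cF xF unfolding convex_def m_def conv3 by (simp add: conv2)
  have m2: "m = (1/3::real) *\<^sub>R y1 + (2/3) *\<^sub>R ((1/2) *\<^sub>R y2 + (1/2) *\<^sub>R y3)"
    unfolding m_def x1_def x2_def x3_def y1_def y2_def y3_def sum_id conv3 ..
  have cP: "convex P" unfolding P_def by simp
  define w where "w = (1/2::real) *\<^sub>R y2 + (1/2) *\<^sub>R y3"
  have wP: "w \<in> P" using cP yin unfolding convex_def w_def by (simp add: conv2)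
  have "Poly_Mapping.lookup m (1,2,1,2) = 1/3"
    using assms unfolding m_def x1_def x2_def x3_def
    by (simp add: lookup_scaleR_pm lookup_add lookup_epv' good_def doubleton_eq_iff cyc_def cyc2_def)
  moreover have "Poly_Mapping.lookup y1 (1,2,1,2) = 1"
    using assms unfolding y1_def
    by (simp add: lookup_epv' good_def doubleton_eq_iff tr_def)
  ultimately have my: "m \<noteq> y1" by auto
  have yw: "y1 \<noteq> w"
  proof
    assume "y1 = w"
    then have "m = y1" unfolding m2 w_def[symmetric] by (simp flip: scaleR_add_left)
    with my show False by simp
  qed
  have "m \<in> open_segment y1 w"
    unfolding in_segment using yw
    by (intro conjI exI[of _ "2/3"]) (auto simp: m2 w_def)
  then have "y1 \<in> F" using F yin wP mF unfolding face_of_def by blast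
  then have "y1 extreme_point_of F" using extreme_point_of_face[OF F] ex(4) by blast
  then have "y1 \<in> S" using FS by blast
  moreover have "y1 \<noteq> x1"
  proof -
    have "Poly_Mapping.lookup y1 (1,3,1,3) = 0" "Poly_Mapping.lookup x1 (1,3,1,3) = 1"
      using assms unfolding y1_def x1_def by (simp_all add: lookup_epv' good_def doubleton_eq_iff tr_def)
    then show ?thesis by auto
  qed
  moreover have "y1 \<noteq> x2"
  proof -
    have "Poly_Mapping.lookup y1 (1,2,2,3) = 0" "Poly_Mapping.lookup x2 (1,2,2,3) = 1"
      using assms unfolding y1_def x2_def by (simp_all add: lookup_epv' good_def doubleton_eq_iff tr_def cyc_def)
    then show ?thesis by auto
  qed
  moreover have "y1 \<noteq> x3"
  proof -
    have "Poly_Mapping.lookup y1 (1,2,1,3) = 0" "Poly_Mapping.lookup x3 (1,2,1,3) = 1"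
      using assms unfolding y1_def x3_def by (simp_all add: lookup_epv' good_def doubleton_eq_iff tr_def cyc2_def)
    then show ?thesis by auto
  qed
  ultimately show False unfolding S_def by blast
qed

end
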